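(* Let $G$ be a finite undirected graph, $\tau\ge1$ an odd integer, and $e=(u,v)\in E(G)$. Then $\phi_\tau(e,G)\ge|V(\Omega(e))|$.
   Context: Graphs are finite, simple, undirected and unweighted; paths may repeat vertices and their length is the number of edges. For vertices $v,u$ of a graph $H$, $u$ is $t$-hop reachable from $v$ in $H$ (written $u\rightarrow_t v$) if there is a path between them in $H$ of length at most $t$. $N_t(v,H)$ is the set of vertices $u\ne v$ that are $t$-hop reachable from $v$ in $H$. For an edge $e=(u,v)$ of $H$, $\Delta_t(e,H)=N_t(u,H)\cap N_t(v,H)$ and $\mathrm{sup}_t(e,H)=|\Delta_t(e,H)|$. The $(k,\tau)$-truss of $G$ is the maximal subgraph $G'$ of $G$ such that $\mathrm{sup}_\tau(e,G')\ge k-2$ for every $e\in E(G')$ (supports computed inside $G'$) and no more edges of $G$ can be added while keeping this property. The higher-order truss number $\phi_\tau(e,G)$ is the maximum $k$ such that $e$ belongs to the $(k,\tau)$-truss of $G$. For odd $\tau$ and an edge $e=(u,v)$, the edge centric $\tau$-diameter subgraph $\Omega(e)$ is the subgraph of $G$ induced by $\{u\}\cup\{v\}\cup\{w : w\rightarrow_{\lfloor\tau/2\rfloor} u \text{ or } w\rightarrow_{\lfloor\tau/2\rfloor} v \text{ in } G\}$. *)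

theory Defs
  imports Main
begin

definition simple_graph :: "'a set \<Rightarrow> 'a set set \<Rightarrow> bool" where
  "simple_graph V E \<longleftrightarrow> finite V \<and> (\<forall>e\<in>E. \<exists>x y. e = {x, y} \<and> x \<noteq> y \<and> x \<in> V \<and> y \<in> V)"

text \<open>A path (vertices may repeat) given as a nonempty vertex list whose consecutive
vertices are adjacent in edge set H; its length is the number of edges.\<close>
definition is_path :: "'a set set \<Rightarrow> 'a list \<Rightarrow> bool" where
  "is_path H p \<longleftrightarrow> p \<noteq> [] \<and> (\<forall>i. Suc i < length p \<longrightarrow> {p ! i, p ! Suc i} \<in> H)"

definition hop_reach :: "'a set set \<Rightarrow> nat \<Rightarrow> 'a \<Rightarrow> 'a \<Rightarrow> bool" where
  "hop_reach H t u v \<longleftrightarrow>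
     (\<exists>p. is_path H p \<and> hd p = u \<and> last p = v \<and> length p - 1 \<le> t)"

definition N_hop :: "'a set set \<Rightarrow> nat \<Rightarrow> 'a \<Rightarrow> 'a set" where
  "N_hop H t v = {u. u \<noteq> v \<and> hop_reach H t u v}"

definition sup_hop :: "'a set set \<Rightarrow> nat \<Rightarrow> 'a \<Rightarrow> 'a \<Rightarrow> nat" where
  "sup_hop H t u v = card (N_hop H t u \<inter> N_hop H t v)"

text \<open>Subgraphs are represented by their edge sets F \<subseteq> E; the support of each edge
is computed inside F. The property: every edge of F has support at least k - 2.\<close>
definition truss_prop :: "'a set set \<Rightarrow> nat \<Rightarrow> nat \<Rightarrow> bool" where
  "truss_prop F \<tau> k \<longleftrightarrow> (\<forall>u v. {u, v} \<in> F \<longrightarrow> int (sup_hop F \<tau> u v) \<ge> int k - 2)"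

definition is_truss :: "'a set set \<Rightarrow> nat \<Rightarrow> nat \<Rightarrow> 'a set set \<Rightarrow> bool" where
  "is_truss E \<tau> k F \<longleftrightarrow> F \<subseteq> E \<and> truss_prop F \<tau> k \<and>
     (\<forall>F'. F \<subset> F' \<and> F' \<subseteq> E \<longrightarrow> \<not> truss_prop F' \<tau> k)"

definition truss_number :: "'a set set \<Rightarrow> nat \<Rightarrow> 'a \<Rightarrow> 'a \<Rightarrow> nat" where
  "truss_number E \<tau> u v = (GREATEST k. \<exists>F. is_truss E \<tau> k F \<and> {u, v} \<in> F)"

definition omega_vertices :: "'a set \<Rightarrow> 'a set set \<Rightarrow> nat \<Rightarrow> 'a \<Rightarrow> 'a \<Rightarrow> 'a set" where
  "omega_vertices V E \<tau> u v =
     {u, v} \<union> {w \<in> V. hop_reach E (\<tau> div 2) w u \<or> hop_reach E (\<tau> div 2) w v}"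

end

theory Submission
  imports Defs
begin

lemma hr0: "hop_reach H 0 x y \<longleftrightarrow> x = y"
proof
  assume "hop_reach H 0 x y"
  then obtain p where p: "is_path H p" "hd p = x" "last p = y" "length p - 1 \<le> 0"
    unfolding hop_reach_def by blast
  then have "p \<noteq> []" by (simp add: is_path_def)
  with p have "length p = 1" by (cases p) auto
  then obtain a where "p = [a]" by (cases p) auto
  with p show "x = y" by simp
next
  assume "x = y"
  then show "hop_reach H 0 x y" unfolding hop_reach_def
    by (intro exI[of _ "[x]"]) (simp add: is_path_def)
qed

lemma hrSuc: "hop_reach H (Suc t) x y \<longleftrightarrow> x = y \<or> (\<exists>z. {x,z} \<in> H \<and> hop_reach H t z y)"
proof
  assume "hop_reach H (Suc t) x y"
  then obtain p where p: "is_path H p" "hd p = x" "last p = y" "length p - 1 \<le> Suc t"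
    unfolding hop_reach_def by blast
  then have ne: "p \<noteq> []" by (simp add: is_path_def)
  then obtain a q where pq: "p = a # q" by (cases p) auto
  show "x = y \<or> (\<exists>z. {x,z} \<in> H \<and> hop_reach H t z y)"
  proof (cases "q = []")
    case True
    then show ?thesis using p pq by simp
  next
    case False
    have e: "{x, hd q} \<in> H" using p(1) p(2) pq False
      unfolding is_path_def by (cases q) force+
    have qp: "is_path H q" using p(1) pq False unfolding is_path_def
      by (metis Suc_less_eq length_Cons nth_Cons_Suc)
    have "hop_reach H t (hd q) y" unfolding hop_reach_def
      using qp p pq False by (intro exI[of _ q]) auto
    then show ?thesis using e by blast
  qed
next
  assume "x = y \<or> (\<exists>z. {x,z} \<in> H \<and> hop_reach H t z y)"
  then show "hop_reach H (Suc t) x y"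
  proof
    assume "x = y" then show ?thesis unfolding hop_reach_def
      by (intro exI[of _ "[x]"]) (simp add: is_path_def)
  next
    assume "\<exists>z. {x,z} \<in> H \<and> hop_reach H t z y"
    then obtain z q where e: "{x,z} \<in> H" and q: "is_path H q" "hd q = z" "last q = y" "length q - 1 \<le> t"
      unfolding hop_reach_def by blast
    have qne: "q \<noteq> []" using q by (simp add: is_path_def)
    have "is_path H (x # q)" unfolding is_path_def
    proof (intro conjI allI impI)
      fix i assume i: "Suc i < length (x # q)"
      show "{(x # q) ! i, (x # q) ! Suc i} \<in> H"
      proof (cases i)
        case 0 then show ?thesis using e q qne by (simp add: hd_conv_nth)
      next
        case (Suc j) then show ?thesis using q i unfolding is_path_def by simp
      qed
    qed simp
    then show ?thesis unfolding hop_reach_def using q qne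
      by (intro exI[of _ "x # q"]) auto
  qed
qed

lemma hr_mono: "hop_reach H t x y \<Longrightarrow> t \<le> s \<Longrightarrow> hop_reach H s x y"
  unfolding hop_reach_def by force

lemma hr_trans: "hop_reach H s x y \<Longrightarrow> hop_reach H t y z \<Longrightarrow> hop_reach H (s+t) x z"
proof (induction s arbitrary: x)
  case 0 then show ?case by (simp add: hr0)
next
  case (Suc s)
  from Suc.prems(1) consider "x = y" | w where "{x,w} \<in> H" "hop_reach H s w y"
    unfolding hrSuc by blast
  then show ?case
  proof cases
    case 1 then show ?thesis using Suc.prems(2) hr_mono by fastforce
  next
    case 2
    then have "hop_reach H (s+t) w z" using Suc by blast
    then show ?thesis using 2 by (simp add: hrSuc) blast
  qed
qed

lemma hr_edge: "{x,y} \<in> H \<Longrightarrow> hop_reach H 1 x y"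
proof -
  assume e: "{x,y} \<in> H"
  have "hop_reach H 0 y y" by (simp add: hr0)
  then have "hop_reach H (Suc 0) x y" using e unfolding hrSuc by blast
  then show ?thesis by simp
qed

lemma hr_sym: "hop_reach H t x y \<Longrightarrow> hop_reach H t y x"
proof (induction t arbitrary: x)
  case 0 then show ?case by (simp add: hr0)
next
  case (Suc t)
  from Suc.prems consider "x = y" | w where "{x,w} \<in> H" "hop_reach H t w y"
    unfolding hrSuc by blast
  then show ?case
  proof cases
    case 1 then show ?thesis by (simp add: hrSuc)
  next
    case 2
    then have a: "hop_reach H t y w" using Suc.IH by blast
    have "{w,x} \<in> H" using 2 by (simp add: insert_commute)
    then have "hop_reach H 1 w x" by (rule hr_edge)
    from hr_trans[OF a this] show ?thesis by simp
  qed
qed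

lemma edge_V:
  assumes "simple_graph V E" "{x,z} \<in> E"
  shows "x \<in> V \<and> z \<in> V \<and> x \<noteq> z"
proof -
  obtain a b where ab: "{x,z} = {a,b}" "a \<noteq> b" "a \<in> V" "b \<in> V"
    using assms unfolding simple_graph_def by meson
  then show ?thesis by (auto simp: doubleton_eq_iff)
qed

lemma hr_V:
  assumes "simple_graph V E" "H \<subseteq> E" "hop_reach H t x y" "x \<noteq> y"
  shows "x \<in> V"
proof (cases t)
  case 0 then show ?thesis using assms(3,4) by (simp add: hr0)
next
  case (Suc s)
  then have "hop_reach H (Suc s) x y" using assms(3) by simp
  then obtain z where "{x,z} \<in> H" using assms(4) unfolding hrSuc by blast
  then have "{x,z} \<in> E" using assms(2) by blast
  then show ?thesis using edge_V[OF assms(1)] by blast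
qed

lemma finE: assumes "simple_graph V E" shows "finite E"
proof -
  have "E \<subseteq> Pow V"
  proof
    fix e assume "e \<in> E"
    then obtain a b where "e = {a,b}" "a \<in> V" "b \<in> V"
      using assms unfolding simple_graph_def by meson
    then show "e \<in> Pow V" by simp
  qed
  moreover have "finite V" using assms by (simp add: simple_graph_def)
  ultimately show ?thesis by (meson finite_Pow_iff finite_subset)
qed

lemma restrict:
  assumes sg: "simple_graph V E"
  and F: "F = {e \<in> E. e \<subseteq> omega_vertices V E \<tau> u v}"
  and c: "c = u \<or> c = v"
  shows "w \<in> V \<Longrightarrow> hop_reach E t w c \<Longrightarrow> t \<le> \<tau> div 2 \<Longrightarrow> hop_reach F t w c"
proof (induction t arbitrary: w)
  case 0 then show ?case by (simp add: hr0)
next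
  case (Suc t)
  show ?case
  proof (cases "w = c")
    case True then show ?thesis by (simp add: hrSuc)
  next
    case False
    have "hop_reach E (Suc t) w c" using Suc.prems(2) .
    then obtain z where z: "{w,z} \<in> E" "hop_reach E t z c" using False unfolding hrSuc by blast
    have zV: "z \<in> V" using edge_V[OF sg z(1)] by blast
    have tle: "t \<le> \<tau> div 2" using Suc.prems(3) by simp
    have "hop_reach E (\<tau> div 2) z c" using hr_mono[OF z(2) tle] .
    then have zO: "z \<in> omega_vertices V E \<tau> u v" using zV c unfolding omega_vertices_def by auto
    have "hop_reach E (\<tau> div 2) w c" using hr_mono[OF Suc.prems(2) Suc.prems(3)] .
    then have wO: "w \<in> omega_vertices V E \<tau> u v" using Suc.prems(1) c unfolding omega_vertices_def by auto
    have "{w,z} \<in> F" using z(1) zO wO unfolding F by simp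
    moreover have "hop_reach F t z c" using Suc.IH[OF zV z(2) tle] .
    ultimately show ?thesis unfolding hrSuc by blast
  qed
qed

theorem lemma6:
  fixes V :: "'a set" and E :: "'a set set" and \<tau> :: nat and u v :: 'a
  assumes "simple_graph V E"
    and "odd \<tau>" and "\<tau> \<ge> 1"
    and "{u, v} \<in> E"
  shows "truss_number E \<tau> u v \<ge> card (omega_vertices V E \<tau> u v)"
proof -
  note sg = assms(1)
  define Om where "Om = omega_vertices V E \<tau> u v"
  define F where "F = {e \<in> E. e \<subseteq> Om}"
  define h where "h = \<tau> div 2"
  have tau: "\<tau> = h + 1 + h" unfolding h_def using odd_two_times_div_two_succ[OF assms(2)] by linarith
  have finV: "finite V" using sg by (simp add: simple_graph_def)
  have uvV: "u \<in> V" "v \<in> V" "u \<noteq> v" using edge_V[OF sg assms(4)] by auto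
  have OV: "Om \<subseteq> V" unfolding Om_def omega_vertices_def using uvV by auto
  have finO: "finite Om" using OV finV finite_subset by blast
  have uvO: "u \<in> Om" "v \<in> Om" unfolding Om_def omega_vertices_def by auto
  have FE: "F \<subseteq> E" unfolding F_def by auto
  have uvF: "{u,v} \<in> F" unfolding F_def using assms(4) uvO by auto
  have Fd: "F = {e \<in> E. e \<subseteq> omega_vertices V E \<tau> u v}" using F_def Om_def by simp
  have toc: "\<exists>c. (c = u \<or> c = v) \<and> hop_reach F h x c" if "x \<in> Om" for x
  proof -
    have self: "hop_reach F h y y" for y using hr_mono[of F 0 y y h] by (simp add: hr0)
    have "x = u \<or> x = v \<or> (x \<in> V \<and> (hop_reach E h x u \<or> hop_reach E h x v))"
      using that unfolding Om_def omega_vertices_def h_def by simp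
    then show ?thesis
    proof (elim disjE conjE)
      assume "x = u" then show ?thesis using self by blast
    next
      assume "x = v" then show ?thesis using self by blast
    next
      assume "x \<in> V" "hop_reach E h x u"
      moreover have "hop_reach F h x u"
        by (rule restrict[OF sg Fd]) (use \<open>x \<in> V\<close> \<open>hop_reach E h x u\<close> in \<open>simp_all add: h_def\<close>)
      ultimately show ?thesis by blast
    next
      assume "x \<in> V" "hop_reach E h x v"
      moreover have "hop_reach F h x v"
        by (rule restrict[OF sg Fd]) (use \<open>x \<in> V\<close> \<open>hop_reach E h x v\<close> in \<open>simp_all add: h_def\<close>)
      ultimately show ?thesis by blast
    qed
  qed
  have cc: "hop_reach F 1 c d" if "c = u \<or> c = v" "d = u \<or> d = v" for c d
  proof -
    have vu: "{v,u} \<in> F" using uvF by (simp add: insert_commute)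
    have self: "hop_reach F 1 y y" for y using hr_mono[of F 0 y y 1] by (simp add: hr0)
    show ?thesis
      using that hr_edge[OF uvF] hr_edge[OF vu] self by blast
  qed
  have all: "hop_reach F \<tau> x y" if "x \<in> Om" "y \<in> Om" for x y
  proof -
    from toc[OF that(1)] obtain c where c: "c = u \<or> c = v" "hop_reach F h x c" by blast
    from toc[OF that(2)] obtain d where d: "d = u \<or> d = v" "hop_reach F h y d" by blast
    have 1: "hop_reach F (h+1) x d" using hr_trans[OF c(2) cc[OF c(1) d(1)]] .
    have 2: "hop_reach F h d y" using hr_sym[OF d(2)] .
    have "hop_reach F (h + 1 + h) x y" using hr_trans[OF 1 2] .
    then show ?thesis using tau by metis
  qed
  have finN: "finite (N_hop H t a)" if "H \<subseteq> E" for H t a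
  proof -
    have "N_hop H t a \<subseteq> V" unfolding N_hop_def using hr_V[OF sg that] by blast
    then show ?thesis using finV finite_subset by blast
  qed
  have tp: "truss_prop F \<tau> (card Om)"
    unfolding truss_prop_def
  proof (intro allI impI)
    fix a b assume ab: "{a,b} \<in> F"
    then have abO: "a \<in> Om" "b \<in> Om" unfolding F_def by auto
    have "a \<noteq> b" using ab FE edge_V[OF sg] by blast
    have sub: "Om - {a,b} \<subseteq> N_hop F \<tau> a \<inter> N_hop F \<tau> b"
      unfolding N_hop_def using all abO by blast
    have "card (Om - {a,b}) = card Om - 2" using abO \<open>a \<noteq> b\<close> finO
      by (simp add: card_Diff_subset)
    moreover have "card (Om - {a,b}) \<le> sup_hop F \<tau> a b" unfolding sup_hop_def
      using card_mono[OF _ sub] finN[OF FE] by blast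
    ultimately show "int (sup_hop F \<tau> a b) \<ge> int (card Om) - 2" by linarith
  qed
  define S where "S = {F'. F \<subseteq> F' \<and> F' \<subseteq> E \<and> truss_prop F' \<tau> (card Om)}"
  have finS: "finite S" unfolding S_def using finE[OF sg]
    by (metis (no_types, lifting) Collect_mono PowI Pow_def finite_Pow_iff rev_finite_subset)
  have "F \<in> S" unfolding S_def using FE tp by auto
  then obtain M where M: "M \<in> S" "\<And>b. b \<in> S \<Longrightarrow> M \<subseteq> b \<Longrightarrow> M = b"
    using finite_has_maximal[OF finS] by blast
  have tr: "is_truss E \<tau> (card Om) M" unfolding is_truss_def
  proof (intro conjI allI impI)
    show "M \<subseteq> E" "truss_prop M \<tau> (card Om)" using M(1) unfolding S_def by auto
  next
    fix F' assume "M \<subset> F' \<and> F' \<subseteq> E"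
    then show "\<not> truss_prop F' \<tau> (card Om)" using M unfolding S_def by blast
  qed
  have uvM: "{u,v} \<in> M" using M(1) uvF unfolding S_def by auto
  have bound: "k \<le> card V + 2" if ex: "\<exists>F'. is_truss E \<tau> k F' \<and> {u, v} \<in> F'" for k
  proof -
    obtain F' where F': "is_truss E \<tau> k F'" "{u,v} \<in> F'" using ex by blast
    have "int (sup_hop F' \<tau> u v) \<ge> int k - 2" using F' unfolding is_truss_def truss_prop_def by blast
    moreover have "sup_hop F' \<tau> u v \<le> card V"
    proof -
      have FE': "F' \<subseteq> E" using F' unfolding is_truss_def by blast
      have "N_hop F' \<tau> u \<inter> N_hop F' \<tau> v \<subseteq> V" unfolding N_hop_def using hr_V[OF sg FE'] by blast
      then show ?thesis unfolding sup_hop_def using card_mono finV by blast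
    qed
    ultimately show ?thesis by linarith
  qed
  show ?thesis unfolding truss_number_def Om_def[symmetric]
    by (rule Greatest_le_nat[where b="card V + 2"]) (use tr uvM bound in blast)+
qed

end
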